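(* Let $(\Theta,\mathcal{D})$ be a measurable space with a probability measure $\nu$, and let $\mathcal{M}^\Theta=\{P^\theta:\theta\in\Theta\}\subseteq\mathcal{M}_1$ with $\theta\mapsto P^\theta(A)$ measurable for all $A\in\mathcal{F}$, and suppose $\mathcal{M}^\Theta$ is closed under countable convex combinations. Let $\mathbb{P}(A)=\int_\Theta P^\theta(A)\,\nu(\mathrm{d}\theta)$ be the mixture probability measure. Let $\alpha$ be of the form $\alpha(Q)=\widetilde\alpha(Q)$ for $Q\in\mathcal{Q}^{\mathbb{P}}$, $\alpha(Q)=+\infty$ for $Q\in\mathcal{M}_1\setminus\mathcal{Q}^{\mathbb{P}}$, where $\mathcal{Q}^{\mathbb{P}}$ is a weak-$*$-closed subset of $\mathcal{P}^{\mathbb{P}}$, $\widetilde\alpha<\infty$ on $\mathcal{Q}^{\mathbb{P}}$ and $\inf_{\mathcal{Q}^{\mathbb{P}}}\widetilde\alpha>-\infty$. Suppose that for all $A\in\mathcal{F}$ with $\mathbb{P}(A)>0$, $$\mathbb{P}(A)>\int_\Theta\widetilde P_2^\theta(A)\,\nu(\mathrm{d}\theta),$$ where $\widetilde P_2^\theta$ denotes the (unnormalized) singular part of the Lebesgue decomposition of $P^\theta$ with respect to $\mathbb{P}$. Then for all $X\in\mathcal{X}^{\mathcal{M}^\Theta}\cap L^\infty(\mathbb{P})$, $$\widehat\rho^{\mathcal{M}^\Theta}(X)=\widehat\rho^{\mathbb{P}}(X)=\rho^{\mathbb{P}}(X)=\rho^{\mathcal{M}^\Theta}(X).$$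
   Context: $(\Omega,\mathcal{F})$ is a measurable space, $\mathcal{M}_1$ the set of probability measures on it with the topology of weak (weak-$*$) convergence, $\mathcal{X}$ the space of pointwise bounded $\mathcal{F}$-measurable real functions, $L^\infty(P)=L^\infty(\Omega,\mathcal{F},P)$, $\mathcal{P}^P=\{Q\in\mathcal{M}_1:Q\ll P\}$. With $\alpha$ as in the claim, $\rho(X)=\sup_{Q\in\mathcal{M}_1}\{\mathbb{E}_Q[-X]-\alpha(Q)\}$ on $\mathcal{X}$ (assumed real-valued). For $P\in\mathcal{M}_1$, $X\in L^\infty(P)$: $\rho^P(X)=\inf_{\{\widetilde X\in\mathcal{X}:P(\widetilde X=X)=1\}}\rho(\widetilde X)$ and $\widehat\rho^P(X)=\sup_{Q\in\mathcal{P}^P}\{\mathbb{E}_Q[-X]-\alpha(Q)\}$. For $\mathcal{M}\subseteq\mathcal{M}_1$: $\mathcal{X}^{\mathcal{M}}=\bigcap_{P\in\mathcal{M}}L^\infty(P)$, $\rho^{\mathcal{M}}(X)=\sup_{P\in\mathcal{M}}\rho^P(X)$, $\widehat\rho^{\mathcal{M}}(X)=\sup_{P\in\mathcal{M}}\widehat\rho^P(X)$. Closed under countable convex combinations: $\sum_i\lambda_iP_i\in\mathcal{M}^\Theta$ for $P_i\in\mathcal{M}^\Theta$, $\lambda_i\ge0$, $\sum\lambda_i=1$. *)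

theory Defs
  imports "HOL-Probability.Probability"
begin

text \<open>The base measurable space (Omega, F) is represented by a measure M (only space M and
  sets M are used).  M1 M is the set of probability measures on (Omega, F).\<close>

definition M1 :: "'a measure \<Rightarrow> 'a measure set" where
  "M1 M = {N. sets N = sets M \<and> prob_space N}"

definition Xb :: "'a measure \<Rightarrow> ('a \<Rightarrow> real) set" where
  "Xb M = {X. X \<in> borel_measurable M \<and> bounded (X ` space M)}"

definition Linf :: "'a measure \<Rightarrow> ('a \<Rightarrow> real) set" where
  "Linf P = {X. X \<in> borel_measurable P \<and> (\<exists>c. AE \<omega> in P. \<bar>X \<omega>\<bar> \<le> c)}"

definition weak_open :: "'a measure \<Rightarrow> 'a measure set \<Rightarrow> bool" where
  "weak_open M U \<longleftrightarrow> U \<subseteq> M1 M \<and>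
     (\<forall>Q\<in>U. \<exists>F e. finite F \<and> F \<subseteq> Xb M \<and> e > 0 \<and>
        {R \<in> M1 M. \<forall>X\<in>F. \<bar>(\<integral>\<omega>. X \<omega> \<partial>R) - (\<integral>\<omega>. X \<omega> \<partial>Q)\<bar> < e} \<subseteq> U)"

definition weak_closed :: "'a measure \<Rightarrow> 'a measure set \<Rightarrow> bool" where
  "weak_closed M S \<longleftrightarrow> S \<subseteq> M1 M \<and> weak_open M (M1 M - S)"

definition rho :: "'a measure \<Rightarrow> ('a measure \<Rightarrow> ereal) \<Rightarrow> ('a \<Rightarrow> real) \<Rightarrow> ereal" where
  "rho M \<alpha> X = (SUP Q \<in> M1 M. ereal (\<integral>\<omega>. - X \<omega> \<partial>Q) - \<alpha> Q)"

definition rhoP :: "'a measure \<Rightarrow> ('a measure \<Rightarrow> ereal) \<Rightarrow> 'a measure \<Rightarrow> ('a \<Rightarrow> real) \<Rightarrow> ereal" where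
  "rhoP M \<alpha> P X = (INF Xt \<in> {Xt \<in> Xb M. AE \<omega> in P. Xt \<omega> = X \<omega>}. rho M \<alpha> Xt)"

definition rho_hat :: "'a measure \<Rightarrow> ('a measure \<Rightarrow> ereal) \<Rightarrow> 'a measure \<Rightarrow> ('a \<Rightarrow> real) \<Rightarrow> ereal" where
  "rho_hat M \<alpha> P X =
     (SUP Q \<in> {Q \<in> M1 M. absolutely_continuous P Q}. ereal (\<integral>\<omega>. - X \<omega> \<partial>Q) - \<alpha> Q)"

definition XM :: "'a measure set \<Rightarrow> ('a \<Rightarrow> real) set" where
  "XM Ms = (\<Inter>P\<in>Ms. Linf P)"

definition rhoM :: "'a measure \<Rightarrow> ('a measure \<Rightarrow> ereal) \<Rightarrow> 'a measure set \<Rightarrow> ('a \<Rightarrow> real) \<Rightarrow> ereal" where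
  "rhoM M \<alpha> Ms X = (SUP P \<in> Ms. rhoP M \<alpha> P X)"

definition rho_hatM :: "'a measure \<Rightarrow> ('a measure \<Rightarrow> ereal) \<Rightarrow> 'a measure set \<Rightarrow> ('a \<Rightarrow> real) \<Rightarrow> ereal" where
  "rho_hatM M \<alpha> Ms X = (SUP P \<in> Ms. rho_hat M \<alpha> P X)"

text \<open>Lebesgue decomposition of P with respect to Pb: P = P1 + P2 with P1 << Pb and
  P2 singular to Pb.  The singular part is the (unique, for finite P) P2.\<close>
definition lebesgue_decomp :: "'a measure \<Rightarrow> 'a measure \<Rightarrow> 'a measure \<Rightarrow> 'a measure \<Rightarrow> bool" where
  "lebesgue_decomp Pb P P1 P2 \<longleftrightarrow>
     sets P1 = sets P \<and> sets P2 = sets P \<and> absolutely_continuous Pb P1 \<and>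
     (\<exists>S\<in>sets P. emeasure Pb S = 0 \<and> emeasure P2 (space P - S) = 0) \<and>
     (\<forall>A\<in>sets P. emeasure P A = emeasure P1 A + emeasure P2 A)"

definition singular_part :: "'a measure \<Rightarrow> 'a measure \<Rightarrow> 'a measure" where
  "singular_part Pb P = (THE P2. \<exists>P1. lebesgue_decomp Pb P P1 P2)"

end

theory Submission imports Defs begin

lemma exhaust:
  fixes \<mu> :: "'a measure" and NN :: "'a set set"
  assumes fm: "finite_measure \<mu>" and sub: "NN \<subseteq> sets \<mu>" and emp: "{} \<in> NN"
    and un: "\<And>F. (\<And>i::nat. F i \<in> NN) \<Longrightarrow> (\<Union>i. F i) \<in> NN"
  shows "\<exists>N\<in>NN. \<forall>E\<in>NN. measure \<mu> (E - N) = 0"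
proof -
  interpret finite_measure \<mu> by (rule fm)
  define s where "s = Sup (measure \<mu> ` NN)"
  have bdd: "bdd_above (measure \<mu> ` NN)"
    using sub bounded_measure by (auto intro!: bdd_aboveI[where M="measure \<mu> (space \<mu>)"])
  have ne: "measure \<mu> ` NN \<noteq> {}" using emp by auto
  have "\<forall>n::nat. \<exists>E\<in>NN. s - 1 / Suc n < measure \<mu> E"
  proof
    fix n :: nat
    have "s - 1 / Suc n < s" by simp
    then show "\<exists>E\<in>NN. s - 1 / Suc n < measure \<mu> E"
      unfolding s_def using less_cSup_iff[OF ne bdd] by auto
  qed
  then obtain F where F: "\<And>n. F n \<in> NN" "\<And>n. s - 1 / Suc n < measure \<mu> (F n)"
    by metis
  define N where "N = (\<Union>n. F n)"
  have N: "N \<in> NN" unfolding N_def using un F by blast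
  have Ns: "N \<in> sets \<mu>" using N sub by auto
  have le: "measure \<mu> N \<le> s" unfolding s_def using N bdd by (auto intro: cSup_upper)
  have ge: "s - 1 / Suc n < measure \<mu> N" for n
  proof -
    have "measure \<mu> (F n) \<le> measure \<mu> N"
      using Ns by (intro finite_measure_mono) (auto simp: N_def)
    then show ?thesis using F(2)[of n] by linarith
  qed
  have eq: "measure \<mu> N = s"
  proof (rule ccontr)
    assume "measure \<mu> N \<noteq> s"
    then have "0 < s - measure \<mu> N" using le by simp
    then obtain n :: nat where "n > 0" "inverse (real n) < s - measure \<mu> N"
      using ex_inverse_of_nat_less by blast
    moreover have "1 / real (Suc (n - 1)) = inverse (real n)" using \<open>n > 0\<close>
      by (simp add: divide_inverse)
    ultimately show False using ge[of "n - 1"] by linarith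
  qed
  show ?thesis
  proof (intro bexI[OF _ N] ballI)
    fix E assume E: "E \<in> NN"
    define G where "G = (\<lambda>i::nat. if i = 0 then E else N)"
    have "(\<Union>i. G i) = E \<union> N" unfolding G_def by (auto split: if_splits)
    then have EN: "E \<union> N \<in> NN" using un[of G] E N unfolding G_def by auto
    have Es: "E \<in> sets \<mu>" using E sub by auto
    have "measure \<mu> (E \<union> N) \<le> s" unfolding s_def using EN bdd by (auto intro: cSup_upper)
    moreover have "measure \<mu> (E \<union> N) = measure \<mu> N + measure \<mu> (E - N)"
    proof -
      have "measure \<mu> (N \<union> (E - N)) = measure \<mu> N + measure \<mu> (E - N)"
        using Es Ns by (intro finite_measure_Union) auto
      moreover have "E \<union> N = N \<union> (E - N)" by auto
      ultimately show ?thesis by simp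
    qed
    ultimately have "measure \<mu> (E - N) \<le> 0" using eq by simp
    then show "measure \<mu> (E - N) = 0" using measure_nonneg[of \<mu> "E - N"] by linarith
  qed
qed

lemma emeasure_split:
  assumes "B \<in> sets M" "C \<in> sets M"
  shows "emeasure M B = emeasure M (B \<inter> C) + emeasure M (B - C)"
proof -
  have "emeasure M (B \<inter> C) + emeasure M (B - C) = emeasure M ((B \<inter> C) \<union> (B - C))"
    using assms by (intro plus_emeasure) auto
  moreover have "(B \<inter> C) \<union> (B - C) = B" by auto
  ultimately show ?thesis by simp
qed

lemma decomp_unique:
  assumes sP: "sets P = sets Pm"
    and N: "N \<in> sets Pm" "emeasure Pm N = 0"
    and maxN: "\<And>E. E \<in> sets Pm \<Longrightarrow> emeasure Pm E = 0 \<Longrightarrow> emeasure P (E - N) = 0"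
    and D: "lebesgue_decomp Pm P P1 P2" and A: "A \<in> sets P"
  shows "emeasure P2 A = emeasure P (A \<inter> N)"
proof -
  from D obtain S where S: "S \<in> sets P" "emeasure Pm S = 0" "emeasure P2 (space P - S) = 0"
    and s1: "sets P1 = sets P" and s2: "sets P2 = sets P"
    and ac: "absolutely_continuous Pm P1"
    and add: "\<And>A. A \<in> sets P \<Longrightarrow> emeasure P A = emeasure P1 A + emeasure P2 A"
    unfolding lebesgue_decomp_def by blast
  have sp2: "space P2 = space P" using s2 by (rule sets_eq_imp_space_eq)
  have AS: "A \<inter> S \<in> sets P" "A - S \<in> sets P" using A S by auto
  have "emeasure P2 (A - S) \<le> emeasure P2 (space P - S)"
    using A S s2 sets.sets_into_space[OF A] by (intro emeasure_mono) auto
  then have "emeasure P2 (A - S) = 0" using S by simp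
  then have P2A: "emeasure P2 A = emeasure P2 (A \<inter> S)"
    using emeasure_split[of A P2 S] A S s2 by simp
  have "emeasure Pm (A \<inter> S) \<le> emeasure Pm S" using AS S sP by (intro emeasure_mono) auto
  then have "emeasure Pm (A \<inter> S) = 0" using S by simp
  then have "emeasure P1 (A \<inter> S) = 0" using absolutely_continuousD[OF ac, of "A \<inter> S"] AS sP by simp
  then have 1: "emeasure P2 A = emeasure P (A \<inter> S)" using add[OF AS(1)] P2A by simp
  have "emeasure Pm (A \<inter> S) = 0" by fact
  then have "emeasure P (A \<inter> S - N) = 0" using maxN AS sP by auto
  then have 2: "emeasure P (A \<inter> S) = emeasure P (A \<inter> S \<inter> N)"
    using emeasure_split[of "A \<inter> S" P N] AS N sP by simp
  have ANS: "A \<inter> N - S \<in> sets P" using A N S sP by auto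
  have "emeasure Pm (A \<inter> N - S) \<le> emeasure Pm N" using ANS N sP by (intro emeasure_mono) auto
  then have "emeasure Pm (A \<inter> N - S) = 0" using N by simp
  then have z1: "emeasure P1 (A \<inter> N - S) = 0" using absolutely_continuousD[OF ac, of "A \<inter> N - S"] ANS sP by simp
  have "emeasure P2 (A \<inter> N - S) \<le> emeasure P2 (space P - S)"
    using ANS S s2 sets.sets_into_space[OF ANS] by (intro emeasure_mono) auto
  then have z2: "emeasure P2 (A \<inter> N - S) = 0" using S by simp
  have "emeasure P (A \<inter> N - S) = 0" using add[OF ANS] z1 z2 by simp
  then have 3: "emeasure P (A \<inter> N) = emeasure P (A \<inter> N \<inter> S)"
    using emeasure_split[of "A \<inter> N" P S] A N S sP by simp
  have "A \<inter> S \<inter> N = A \<inter> N \<inter> S" by auto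
  then show ?thesis using 1 2 3 by simp
qed

lemma sing_part:
  assumes P: "prob_space P" and Pm: "prob_space Pm" and sP: "sets P = sets Pm"
  obtains N where "N \<in> sets Pm" "emeasure Pm N = 0"
    "\<And>E. E \<in> sets Pm \<Longrightarrow> emeasure Pm E = 0 \<Longrightarrow> emeasure P (E - N) = 0"
    "\<And>A. A \<in> sets P \<Longrightarrow> emeasure (singular_part Pm P) A = emeasure P (A \<inter> N)"
proof -
  interpret P: prob_space P by (rule P)
  have "\<exists>N\<in>null_sets Pm. \<forall>E\<in>null_sets Pm. measure P (E - N) = 0"
  proof (rule exhaust)
    show "finite_measure P" by (rule P.finite_measure_axioms)
    show "null_sets Pm \<subseteq> sets P" using sP by auto
    show "{} \<in> null_sets Pm" by simp
    fix F :: "nat \<Rightarrow> 'a set" assume "\<And>i. F i \<in> null_sets Pm"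
    then show "(\<Union>i. F i) \<in> null_sets Pm" by (rule null_sets_UN)
  qed
  then obtain N where N: "N \<in> null_sets Pm" and mx: "\<And>E. E \<in> null_sets Pm \<Longrightarrow> measure P (E - N) = 0"
    by blast
  have Ns: "N \<in> sets Pm" "emeasure Pm N = 0" using N by auto
  have maxN: "emeasure P (E - N) = 0" if "E \<in> sets Pm" "emeasure Pm E = 0" for E
  proof -
    have "E - N \<in> sets P" using that Ns sP by auto
    moreover have "E \<in> null_sets Pm" using that by (simp add: null_sets_def)
    ultimately show ?thesis using mx[of E] by (simp add: P.emeasure_eq_measure)
  qed
  define P1 where "P1 = density P (indicator (space P - N))"
  define P2 where "P2 = density P (indicator N)"
  have NP: "N \<in> sets P" using Ns sP by simp
  have e1: "emeasure P1 A = emeasure P (A - N)" if "A \<in> sets P" for A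
  proof -
    have "emeasure P1 A = (\<integral>\<^sup>+ x. indicator (space P - N) x * indicator A x \<partial>P)"
      unfolding P1_def using that NP by (intro emeasure_density) auto
    also have "\<dots> = (\<integral>\<^sup>+ x. indicator (A - N) x \<partial>P)"
      using sets.sets_into_space[OF that]
      by (intro nn_integral_cong) (auto simp: indicator_def)
    also have "\<dots> = emeasure P (A - N)" using that NP by (intro nn_integral_indicator) auto
    finally show ?thesis .
  qed
  have e2: "emeasure P2 A = emeasure P (A \<inter> N)" if "A \<in> sets P" for A
  proof -
    have "emeasure P2 A = (\<integral>\<^sup>+ x. indicator N x * indicator A x \<partial>P)"
      unfolding P2_def using that NP by (intro emeasure_density) auto
    also have "\<dots> = (\<integral>\<^sup>+ x. indicator (A \<inter> N) x \<partial>P)"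
      by (intro nn_integral_cong) (auto simp: indicator_def)
    also have "\<dots> = emeasure P (A \<inter> N)" using that NP by (intro nn_integral_indicator) auto
    finally show ?thesis .
  qed
  have D: "lebesgue_decomp Pm P P1 P2"
    unfolding lebesgue_decomp_def
  proof (intro conjI ballI bexI)
    show "sets P1 = sets P" "sets P2 = sets P" unfolding P1_def P2_def by auto
    show "absolutely_continuous Pm P1"
      unfolding absolutely_continuous_def
    proof
      fix A assume "A \<in> null_sets Pm"
      then have A: "A \<in> sets P" "emeasure Pm A = 0" using sP by auto
      have "emeasure P1 A = 0" using e1[OF A(1)] maxN[of A] sP A by simp
      moreover have "A \<in> sets P1" using A unfolding P1_def by simp
      ultimately show "A \<in> null_sets P1" by (rule null_setsI)
    qed
    show "N \<in> sets P" by (rule NP)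
    show "emeasure Pm N = 0" by (rule Ns(2))
    have "space P - N \<in> sets P" using NP by auto
    then show "emeasure P2 (space P - N) = 0" using e2[of "space P - N"] by (simp add: Int_commute)
    fix A assume A: "A \<in> sets P"
    show "emeasure P A = emeasure P1 A + emeasure P2 A"
      using e1[OF A] e2[OF A] emeasure_split[OF A NP] by (simp add: add.commute)
  qed
  have Dsp: "lebesgue_decomp Pm P (SOME P1. lebesgue_decomp Pm P P1 (singular_part Pm P)) (singular_part Pm P)"
  proof -
    have "\<exists>P1. lebesgue_decomp Pm P P1 (singular_part Pm P)"
      unfolding singular_part_def
    proof (rule theI[where a=P2])
      show "\<exists>P1. lebesgue_decomp Pm P P1 P2" using D by blast
      fix Q2 assume "\<exists>P1. lebesgue_decomp Pm P P1 Q2"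
      then obtain Q1 where Q: "lebesgue_decomp Pm P Q1 Q2" by blast
      have "sets Q2 = sets P" using Q unfolding lebesgue_decomp_def by blast
      moreover have "sets P2 = sets P" unfolding P2_def by simp
      ultimately show "Q2 = P2"
      proof (intro measure_eqI)
        fix A assume "A \<in> sets Q2"
        then have "A \<in> sets P" using \<open>sets Q2 = sets P\<close> by simp
        then show "emeasure Q2 A = emeasure P2 A"
          using decomp_unique[OF sP Ns maxN Q] e2 by simp
      qed simp
    qed
    then show ?thesis by (rule someI_ex)
  qed
  show ?thesis
    using that[OF Ns maxN decomp_unique[OF sP Ns maxN Dsp]] by blast
qed


lemma dominating:
  fixes M :: "'a measure" and \<nu> :: "'b measure" and Pt :: "'b \<Rightarrow> 'a measure"
    and Pm :: "'a measure"
  assumes nu: "prob_space \<nu>"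
    and Pt_M1: "\<forall>\<theta>\<in>space \<nu>. Pt \<theta> \<in> M1 M"
    and Pt_meas: "\<forall>A\<in>sets M. (\<lambda>\<theta>. measure (Pt \<theta>) A) \<in> borel_measurable \<nu>"
    and conv: "\<forall>P lam. (\<forall>i. P i \<in> Pt ` space \<nu>) \<longrightarrow> (\<forall>i. lam i \<ge> 0) \<longrightarrow> lam sums 1 \<longrightarrow>
        (\<exists>\<theta>\<in>space \<nu>. \<forall>A\<in>sets M. measure (Pt \<theta>) A = (\<Sum>i. lam i * measure (P i) A))"
    and Pm_M1: "Pm \<in> M1 M"
    and Pm_mix: "\<forall>A\<in>sets M. measure Pm A = (\<integral>\<theta>. measure (Pt \<theta>) A \<partial>\<nu>)"
    and sing: "\<forall>A\<in>sets M. measure Pm A > 0 \<longrightarrow>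
        emeasure Pm A > (\<integral>\<^sup>+\<theta>. emeasure (singular_part Pm (Pt \<theta>)) A \<partial>\<nu>)"
  shows "\<exists>\<theta>\<in>space \<nu>. absolutely_continuous (Pt \<theta>) Pm"
proof -
  interpret nu: prob_space \<nu> by (rule nu)
  have Ptp: "prob_space (Pt \<theta>)" "sets (Pt \<theta>) = sets M" if "\<theta> \<in> space \<nu>" for \<theta>
    using Pt_M1 that unfolding M1_def by auto
  have Pmp: "prob_space Pm" and sPm: "sets Pm = sets M" using Pm_M1 unfolding M1_def by auto
  interpret Pm: prob_space Pm by (rule Pmp)
  have Pt_em: "emeasure (Pt \<theta>) A = ennreal (measure (Pt \<theta>) A)" if "\<theta> \<in> space \<nu>" for \<theta> A
    using Ptp[OF that] by (simp add: finite_measure.emeasure_eq_measure prob_space.finite_measure)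
  have Pt_le1: "measure (Pt \<theta>) A \<le> 1" if "\<theta> \<in> space \<nu>" for \<theta> A
    using Ptp[OF that] by (simp add: prob_space.prob_le_1)
  define good where "good C \<theta> \<longleftrightarrow> \<theta> \<in> space \<nu> \<and>
      (\<forall>A\<in>sets M. A \<subseteq> C \<longrightarrow> measure Pm A > 0 \<longrightarrow> measure (Pt \<theta>) A > 0)" for C \<theta>
  define CC where "CC = {C \<in> sets M. \<exists>\<theta>. good C \<theta>}"
  have "\<exists>N\<in>CC. \<forall>E\<in>CC. measure Pm (E - N) = 0"
  proof (rule exhaust)
    show "finite_measure Pm" by (rule Pm.finite_measure_axioms)
    show "CC \<subseteq> sets Pm" unfolding CC_def using sPm by auto
    obtain \<theta>0 where "\<theta>0 \<in> space \<nu>" using nu.not_empty by blast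
    then have "good {} \<theta>0" unfolding good_def by auto
    then show "{} \<in> CC" unfolding CC_def by auto
    fix F :: "nat \<Rightarrow> 'a set" assume F: "\<And>i. F i \<in> CC"
    then have "\<forall>i. \<exists>\<theta>. good (F i) \<theta>" unfolding CC_def by auto
    then obtain th where th: "\<And>i. good (F i) (th i)" by metis
    define lam where "lam = (\<lambda>i::nat. (1/2::real)^Suc i)"
    have lam_sums: "lam sums 1" unfolding lam_def by (rule power_half_series)
    obtain ts where ts: "ts \<in> space \<nu>"
      and tsm: "\<And>A. A \<in> sets M \<Longrightarrow> measure (Pt ts) A = (\<Sum>i. lam i * measure (Pt (th i)) A)"
      using conv[rule_format, of "\<lambda>i. Pt (th i)" lam] th lam_sums
      unfolding good_def lam_def by auto
    have "good (\<Union>i. F i) ts" unfolding good_def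
    proof (intro conjI ballI impI)
      show "ts \<in> space \<nu>" by (rule ts)
      fix A assume A: "A \<in> sets M" "A \<subseteq> (\<Union>i. F i)" "measure Pm A > 0"
      have Fs: "F i \<in> sets M" for i using F unfolding CC_def by auto
      have "\<exists>i. measure Pm (A \<inter> F i) > 0"
      proof (rule ccontr)
        assume "\<not> ?thesis"
        then have "A \<inter> F i \<in> null_sets Pm" for i
          using A Fs sPm measure_le_0_iff[of Pm "A \<inter> F i"]
          by (auto simp: Pm.emeasure_eq_measure null_sets_def not_less)
        then have "(\<Union>i. A \<inter> F i) \<in> null_sets Pm" by (rule null_sets_UN)
        moreover have "(\<Union>i. A \<inter> F i) = A" using A by auto
        ultimately show False using A by (simp add: null_sets_def Pm.emeasure_eq_measure)
      qed
      then obtain i where i: "measure Pm (A \<inter> F i) > 0" by blast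
      have "measure (Pt (th i)) (A \<inter> F i) > 0"
        using th[of i] i A Fs unfolding good_def by auto
      moreover have "measure (Pt (th i)) (A \<inter> F i) \<le> measure (Pt (th i)) A"
        using th[of i] A Fs Ptp[of "th i"] unfolding good_def
        by (intro finite_measure.finite_measure_mono prob_space.finite_measure) auto
      ultimately have pos: "measure (Pt (th i)) A > 0" by linarith
      have sm: "summable (\<lambda>j. lam j * measure (Pt (th j)) A)"
      proof (rule summable_comparison_test[OF _ sums_summable[OF lam_sums]])
        show "\<exists>N. \<forall>n\<ge>N. norm (lam n * measure (Pt (th n)) A) \<le> lam n"
          using Pt_le1 th unfolding good_def lam_def
          by (auto intro!: exI[of _ 0] mult_left_le)
      qed
      have "0 < (\<Sum>j. lam j * measure (Pt (th j)) A)"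
        using sm pos by (intro suminf_pos2[of _ i]) (auto simp: lam_def)
      then show "measure (Pt ts) A > 0" using tsm[OF A(1)] by simp
    qed
    moreover have "(\<Union>i. F i) \<in> sets M" using F unfolding CC_def by auto
    ultimately show "(\<Union>i. F i) \<in> CC" unfolding CC_def by auto
  qed
  then obtain Cs where Cs: "Cs \<in> CC" and Csmax: "\<And>E. E \<in> CC \<Longrightarrow> measure Pm (E - Cs) = 0"
    by blast
  obtain ts where ts: "good Cs ts" using Cs unfolding CC_def by auto
  have Css: "Cs \<in> sets M" using Cs unfolding CC_def by auto
  define B where "B = space M - Cs"
  have Bs: "B \<in> sets M" unfolding B_def using Css by auto
  have B0: "measure Pm B = 0"
  proof (rule ccontr)
    assume "measure Pm B \<noteq> 0"
    then have Bpos: "measure Pm B > 0" using measure_nonneg[of Pm B] by linarith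
    have "\<forall>\<theta>\<in>space \<nu>. \<exists>N. N \<in> sets M \<and> emeasure Pm N = 0 \<and>
        (\<forall>E\<in>sets M. emeasure Pm E = 0 \<longrightarrow> emeasure (Pt \<theta>) (E - N) = 0) \<and>
        (\<forall>A\<in>sets M. emeasure (singular_part Pm (Pt \<theta>)) A = emeasure (Pt \<theta>) (A \<inter> N))"
    proof
      fix \<theta> assume th: "\<theta> \<in> space \<nu>"
      obtain N where "N \<in> sets Pm" "emeasure Pm N = 0"
        "\<And>E. E \<in> sets Pm \<Longrightarrow> emeasure Pm E = 0 \<Longrightarrow> emeasure (Pt \<theta>) (E - N) = 0"
        "\<And>A. A \<in> sets (Pt \<theta>) \<Longrightarrow> emeasure (singular_part Pm (Pt \<theta>)) A = emeasure (Pt \<theta>) (A \<inter> N)"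
        using sing_part[OF Ptp(1)[OF th] Pmp] Ptp(2)[OF th] sPm by metis
      then show "\<exists>N. N \<in> sets M \<and> emeasure Pm N = 0 \<and>
        (\<forall>E\<in>sets M. emeasure Pm E = 0 \<longrightarrow> emeasure (Pt \<theta>) (E - N) = 0) \<and>
        (\<forall>A\<in>sets M. emeasure (singular_part Pm (Pt \<theta>)) A = emeasure (Pt \<theta>) (A \<inter> N))"
        using Ptp(2)[OF th] sPm by (intro exI[of _ N]) auto
    qed
    then obtain NN where NN: "\<And>\<theta>. \<theta> \<in> space \<nu> \<Longrightarrow> NN \<theta> \<in> sets M \<and> emeasure Pm (NN \<theta>) = 0 \<and>
        (\<forall>E\<in>sets M. emeasure Pm E = 0 \<longrightarrow> emeasure (Pt \<theta>) (E - NN \<theta>) = 0) \<and>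
        (\<forall>A\<in>sets M. emeasure (singular_part Pm (Pt \<theta>)) A = emeasure (Pt \<theta>) (A \<inter> NN \<theta>))"
      by metis
    have "\<exists>\<theta>\<in>space \<nu>. emeasure (Pt \<theta>) (B - NN \<theta>) > 0"
    proof (rule ccontr)
      assume "\<not> ?thesis"
      then have z: "emeasure (Pt \<theta>) (B - NN \<theta>) = 0" if "\<theta> \<in> space \<nu>" for \<theta>
        using that by (auto simp: not_less)
      have eqs: "emeasure (singular_part Pm (Pt \<theta>)) B = ennreal (measure (Pt \<theta>) B)"
        if th: "\<theta> \<in> space \<nu>" for \<theta>
      proof -
        have "emeasure (Pt \<theta>) B = emeasure (Pt \<theta>) (B \<inter> NN \<theta>) + emeasure (Pt \<theta>) (B - NN \<theta>)"
          using Bs NN[OF th] Ptp(2)[OF th] by (intro emeasure_split) auto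
        then show ?thesis using z[OF th] NN[OF th] Bs Pt_em[OF th] by simp
      qed
      have "(\<integral>\<^sup>+\<theta>. emeasure (singular_part Pm (Pt \<theta>)) B \<partial>\<nu>) = (\<integral>\<^sup>+\<theta>. ennreal (measure (Pt \<theta>) B) \<partial>\<nu>)"
        using eqs by (intro nn_integral_cong) auto
      also have "\<dots> = ennreal (\<integral>\<theta>. measure (Pt \<theta>) B \<partial>\<nu>)"
      proof (rule nn_integral_eq_integral)
        show "integrable \<nu> (\<lambda>\<theta>. measure (Pt \<theta>) B)"
          using Pt_meas Bs Pt_le1 by (intro nu.integrable_const_bound[where B=1]) auto
      qed auto
      also have "\<dots> = emeasure Pm B" using Pm_mix Bs by (simp add: Pm.emeasure_eq_measure)
      finally show False using sing Bs Bpos by auto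
    qed
    then obtain t0 where t0: "t0 \<in> space \<nu>" and E0pos: "emeasure (Pt t0) (B - NN t0) > 0" by blast
    define E0 where "E0 = B - NN t0"
    have E0s: "E0 \<in> sets M" unfolding E0_def using Bs NN[OF t0] by auto
    define ZZ where "ZZ = {Z \<in> sets M. Z \<subseteq> E0 \<and> emeasure (Pt t0) Z = 0}"
    have "\<exists>N\<in>ZZ. \<forall>E\<in>ZZ. measure Pm (E - N) = 0"
    proof (rule exhaust)
      show "finite_measure Pm" by (rule Pm.finite_measure_axioms)
      show "ZZ \<subseteq> sets Pm" unfolding ZZ_def using sPm by auto
      show "{} \<in> ZZ" unfolding ZZ_def by auto
      fix F :: "nat \<Rightarrow> 'a set" assume F: "\<And>i. F i \<in> ZZ"
      then have "F i \<in> null_sets (Pt t0)" for i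
        unfolding ZZ_def using Ptp(2)[OF t0] by (auto simp: null_sets_def)
      then have "(\<Union>i. F i) \<in> null_sets (Pt t0)" by (rule null_sets_UN)
      then show "(\<Union>i. F i) \<in> ZZ" using F Ptp(2)[OF t0] unfolding ZZ_def
        by (auto simp: null_sets_def)
    qed
    then obtain Z where Z: "Z \<in> ZZ" and Zmax: "\<And>E. E \<in> ZZ \<Longrightarrow> measure Pm (E - Z) = 0" by blast
    have Zs: "Z \<in> sets M" "Z \<subseteq> E0" "emeasure (Pt t0) Z = 0" using Z unfolding ZZ_def by auto
    define D where "D = E0 - Z"
    have Ds: "D \<in> sets M" unfolding D_def using E0s Zs by auto
    have "good D t0" unfolding good_def
    proof (intro conjI ballI impI t0)
      fix A assume A: "A \<in> sets M" "A \<subseteq> D" "measure Pm A > 0"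
      show "measure (Pt t0) A > 0"
      proof (rule ccontr)
        assume "\<not> ?thesis"
        then have "measure (Pt t0) A = 0" using measure_nonneg[of "Pt t0" A] by linarith
        then have "A \<in> null_sets (Pt t0)" using A Ptp(2)[OF t0] Pt_em[OF t0, of A]
          by (simp add: null_sets_def)
        moreover have "Z \<in> null_sets (Pt t0)" using Zs Ptp(2)[OF t0] by (simp add: null_sets_def)
        ultimately have "Z \<union> A \<in> null_sets (Pt t0)" by auto
        then have "Z \<union> A \<in> ZZ" using Zs A Ptp(2)[OF t0] unfolding ZZ_def D_def
          by (auto simp: null_sets_def)
        then have "measure Pm ((Z \<union> A) - Z) = 0" by (rule Zmax)
        moreover have "(Z \<union> A) - Z = A" using A unfolding D_def by auto
        ultimately show False using A by simp
      qed
    qed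
    then have "D \<in> CC" unfolding CC_def using Ds by auto
    then have "measure Pm (D - Cs) = 0" by (rule Csmax)
    moreover have "D - Cs = D" unfolding D_def E0_def B_def by auto
    ultimately have "emeasure Pm D = 0" by (simp add: Pm.emeasure_eq_measure)
    then have "emeasure (Pt t0) (D - NN t0) = 0" using NN[OF t0] Ds by blast
    moreover have "D - NN t0 = D" unfolding D_def E0_def by auto
    moreover have "emeasure (Pt t0) E0 = emeasure (Pt t0) (E0 \<inter> Z) + emeasure (Pt t0) (E0 - Z)"
      using E0s Zs Ptp(2)[OF t0] by (intro emeasure_split) auto
    moreover have "E0 \<inter> Z = Z" using Zs by auto
    ultimately show False using E0pos Zs unfolding D_def E0_def by simp
  qed
  have "absolutely_continuous (Pt ts) Pm"
    unfolding absolutely_continuous_def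
  proof
    fix A assume A: "A \<in> null_sets (Pt ts)"
    have tsn: "ts \<in> space \<nu>" using ts unfolding good_def by auto
    have As: "A \<in> sets M" using A Ptp[OF tsn] by (auto simp: null_sets_def)
    have "measure (Pt ts) A = 0" using A by (simp add: measure_def null_sets_def)
    have "measure Pm A = 0"
    proof (rule ccontr)
      assume "measure Pm A \<noteq> 0"
      then have Apos: "measure Pm A > 0" using measure_nonneg[of Pm A] by linarith
      have "measure Pm ((A \<inter> Cs) \<union> (A - Cs)) = measure Pm (A \<inter> Cs) + measure Pm (A - Cs)"
        using As Css sPm by (intro Pm.finite_measure_Union) auto
      then have spl: "measure Pm A = measure Pm (A \<inter> Cs) + measure Pm (A - Cs)"
        by (simp add: Int_Diff_Un)
      have "measure Pm (A - Cs) \<le> measure Pm B"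
        using As Bs sPm sets.sets_into_space[OF As] unfolding B_def
        by (intro Pm.finite_measure_mono) auto
      then have "measure Pm (A \<inter> Cs) > 0" using spl Apos B0 by linarith
      then have "measure (Pt ts) (A \<inter> Cs) > 0" using ts As Css unfolding good_def by auto
      moreover have "measure (Pt ts) (A \<inter> Cs) \<le> measure (Pt ts) A"
        using As Ptp[OF tsn]
        by (intro finite_measure.finite_measure_mono prob_space.finite_measure) auto
      ultimately show False using \<open>measure (Pt ts) A = 0\<close> by linarith
    qed
    then show "A \<in> null_sets Pm" using As sPm by (simp add: null_sets_def Pm.emeasure_eq_measure)
  qed
  then show ?thesis using ts unfolding good_def by auto
qed


lemma integral_ac_eq:
  assumes Q: "sets Q = sets M" and P: "sets P = sets M" and ac: "absolutely_continuous P Q"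
    and X: "X \<in> borel_measurable M" and Y: "Y \<in> borel_measurable M"
    and AE: "AE \<omega> in P. Y \<omega> = X \<omega>"
  shows "(\<integral>\<omega>. - Y \<omega> \<partial>Q) = (\<integral>\<omega>. - X \<omega> \<partial>Q)"
proof -
  have "AE \<omega> in Q. Y \<omega> = X \<omega>"
    using Q P ac AE by (intro absolutely_continuous_AE[of Q P]) auto
  moreover have "X \<in> borel_measurable Q" "Y \<in> borel_measurable Q"
    using X Y Q by (auto simp: measurable_cong_sets[OF Q refl])
  ultimately show ?thesis by (intro integral_cong_AE) auto
qed

lemma trunc_Xb:
  assumes X: "X \<in> borel_measurable M"
  shows "(\<lambda>\<omega>. max (- c) (min c (X \<omega>))) \<in> Xb M"
proof -
  have "(\<lambda>\<omega>. max (- c) (min c (X \<omega>))) \<in> borel_measurable M" using X by measurable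
  moreover have "bounded ((\<lambda>\<omega>. max (- c) (min c (X \<omega>))) ` space M)"
    unfolding bounded_iff by (intro exI[of _ "\<bar>c\<bar>"]) auto
  ultimately show ?thesis unfolding Xb_def by auto
qed

theorem corollary6p14:
  fixes M :: "'a measure" and \<nu> :: "'b measure" and Pt :: "'b \<Rightarrow> 'a measure"
    and Pm :: "'a measure"
    and Qset :: "'a measure set" and alpha_t :: "'a measure \<Rightarrow> real"
    and \<alpha> :: "'a measure \<Rightarrow> ereal"
  assumes nu: "prob_space \<nu>"
    and Pt_M1: "\<forall>\<theta>\<in>space \<nu>. Pt \<theta> \<in> M1 M"
    and Pt_meas: "\<forall>A\<in>sets M. (\<lambda>\<theta>. measure (Pt \<theta>) A) \<in> borel_measurable \<nu>"
    and conv: "\<forall>P lam. (\<forall>i. P i \<in> Pt ` space \<nu>) \<longrightarrow> (\<forall>i. lam i \<ge> 0) \<longrightarrow> lam sums 1 \<longrightarrow>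
        (\<exists>\<theta>\<in>space \<nu>. \<forall>A\<in>sets M. measure (Pt \<theta>) A = (\<Sum>i. lam i * measure (P i) A))"
    and Pm_M1: "Pm \<in> M1 M"
    and Pm_mix: "\<forall>A\<in>sets M. measure Pm A = (\<integral>\<theta>. measure (Pt \<theta>) A \<partial>\<nu>)"
    and alpha_def: "\<forall>Q. \<alpha> Q = (if Q \<in> Qset then ereal (alpha_t Q) else \<infinity>)"
    and Qset_sub: "Qset \<subseteq> {Q \<in> M1 M. absolutely_continuous Pm Q}"
    and Qset_closed: "weak_closed M Qset"
    and at_bdd: "bdd_below (alpha_t ` Qset)"
    and rho_real: "\<forall>X\<in>Xb M. \<bar>rho M \<alpha> X\<bar> \<noteq> \<infinity>"
    and sing: "\<forall>A\<in>sets M. measure Pm A > 0 \<longrightarrow>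
        emeasure Pm A > (\<integral>\<^sup>+\<theta>. emeasure (singular_part Pm (Pt \<theta>)) A \<partial>\<nu>)"
    and X: "X \<in> XM (Pt ` space \<nu>) \<inter> Linf Pm"
  shows "rho_hatM M \<alpha> (Pt ` space \<nu>) X = rho_hat M \<alpha> Pm X \<and>
         rho_hat M \<alpha> Pm X = rhoP M \<alpha> Pm X \<and>
         rhoP M \<alpha> Pm X = rhoM M \<alpha> (Pt ` space \<nu>) X"
proof -
  let ?Ms = "Pt ` space \<nu>"
  define V where "V = rho_hat M \<alpha> Pm X"
  have sPm: "sets Pm = sets M" using Pm_M1 unfolding M1_def by auto
  have sPt: "sets (Pt \<theta>) = sets M" if "\<theta> \<in> space \<nu>" for \<theta>
    using Pt_M1 that unfolding M1_def by auto
  have XPm: "X \<in> Linf Pm" using X by auto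
  have XPt: "X \<in> Linf (Pt \<theta>)" if "\<theta> \<in> space \<nu>" for \<theta>
    using X that unfolding XM_def by auto
  have Xm: "X \<in> borel_measurable M"
    using XPm sPm unfolding Linf_def by (auto simp: measurable_cong_sets[OF sPm refl])
  obtain c1 where c1: "AE \<omega> in Pm. \<bar>X \<omega>\<bar> \<le> c1" using XPm unfolding Linf_def by auto
  have infty: "ereal r - \<alpha> Q = - \<infinity>" if "Q \<notin> Qset" for r Q
    using alpha_def that by simp
  have R: "rho M \<alpha> Xt = V" if Xt: "Xt \<in> Xb M" and AEt: "AE \<omega> in Pm. Xt \<omega> = X \<omega>" for Xt
  proof -
    have Xtm: "Xt \<in> borel_measurable M" using Xt unfolding Xb_def by auto
    have eqi: "(\<integral>\<omega>. - Xt \<omega> \<partial>Q) = (\<integral>\<omega>. - X \<omega> \<partial>Q)" if "Q \<in> Qset" for Q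
      using that Qset_sub sPm Xm Xtm AEt unfolding M1_def
      by (intro integral_ac_eq[OF _ sPm _ Xm Xtm AEt]) auto
    show ?thesis unfolding rho_def V_def rho_hat_def
    proof (rule antisym)
      show "(SUP Q \<in> M1 M. ereal (\<integral>\<omega>. - Xt \<omega> \<partial>Q) - \<alpha> Q)
          \<le> (SUP Q \<in> {Q \<in> M1 M. absolutely_continuous Pm Q}. ereal (\<integral>\<omega>. - X \<omega> \<partial>Q) - \<alpha> Q)"
      proof (rule SUP_least)
        fix Q assume Q: "Q \<in> M1 M"
        show "ereal (\<integral>\<omega>. - Xt \<omega> \<partial>Q) - \<alpha> Q
          \<le> (SUP Q \<in> {Q \<in> M1 M. absolutely_continuous Pm Q}. ereal (\<integral>\<omega>. - X \<omega> \<partial>Q) - \<alpha> Q)"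
        proof (cases "Q \<in> Qset")
          case True
          then show ?thesis using eqi[OF True] Qset_sub by (intro SUP_upper2[of Q]) auto
        qed (simp add: infty)
      qed
      show "(SUP Q \<in> {Q \<in> M1 M. absolutely_continuous Pm Q}. ereal (\<integral>\<omega>. - X \<omega> \<partial>Q) - \<alpha> Q)
          \<le> (SUP Q \<in> M1 M. ereal (\<integral>\<omega>. - Xt \<omega> \<partial>Q) - \<alpha> Q)"
      proof (rule SUP_least)
        fix Q assume Q: "Q \<in> {Q \<in> M1 M. absolutely_continuous Pm Q}"
        show "ereal (\<integral>\<omega>. - X \<omega> \<partial>Q) - \<alpha> Q \<le> (SUP Q \<in> M1 M. ereal (\<integral>\<omega>. - Xt \<omega> \<partial>Q) - \<alpha> Q)"
        proof (cases "Q \<in> Qset")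
          case True
          then show ?thesis using eqi[OF True] Q by (intro SUP_upper2[of Q]) auto
        qed (simp add: infty)
      qed
    qed
  qed
  define Xc where "Xc c = (\<lambda>\<omega>. max (- c) (min c (X \<omega>)))" for c
  have XcXb: "Xc c \<in> Xb M" for c unfolding Xc_def by (rule trunc_Xb[OF Xm])
  have Xc_eq: "\<bar>X \<omega>\<bar> \<le> c \<Longrightarrow> Xc c \<omega> = X \<omega>" for c \<omega> unfolding Xc_def by auto
  have step1: "rhoP M \<alpha> Pm X = V"
    unfolding rhoP_def
  proof (rule antisym)
    have "AE \<omega> in Pm. Xc c1 \<omega> = X \<omega>" using c1 by eventually_elim (rule Xc_eq)
    then show "(INF Xt \<in> {Xt \<in> Xb M. AE \<omega> in Pm. Xt \<omega> = X \<omega>}. rho M \<alpha> Xt) \<le> V"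
      using R[OF XcXb] XcXb by (intro INF_lower2[of "Xc c1"]) auto
    show "V \<le> (INF Xt \<in> {Xt \<in> Xb M. AE \<omega> in Pm. Xt \<omega> = X \<omega>}. rho M \<alpha> Xt)"
      using R by (intro INF_greatest) auto
  qed
  have step2: "rhoP M \<alpha> (Pt \<theta>) X \<le> V" if th: "\<theta> \<in> space \<nu>" for \<theta>
  proof -
    obtain c2 where c2: "AE \<omega> in Pt \<theta>. \<bar>X \<omega>\<bar> \<le> c2" using XPt[OF th] unfolding Linf_def by auto
    have "AE \<omega> in Pm. Xc (max c1 c2) \<omega> = X \<omega>" using c1 by eventually_elim (auto intro: Xc_eq)
    moreover have "AE \<omega> in Pt \<theta>. Xc (max c1 c2) \<omega> = X \<omega>" using c2 by eventually_elim (auto intro: Xc_eq)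
    ultimately show ?thesis unfolding rhoP_def
      using R[OF XcXb] XcXb by (intro INF_lower2[of "Xc (max c1 c2)"]) auto
  qed
  have step3: "rho_hat M \<alpha> (Pt \<theta>) X \<le> rhoP M \<alpha> (Pt \<theta>) X" if th: "\<theta> \<in> space \<nu>" for \<theta>
    unfolding rhoP_def
  proof (rule INF_greatest)
    fix Xt assume Xt: "Xt \<in> {Xt \<in> Xb M. AE \<omega> in Pt \<theta>. Xt \<omega> = X \<omega>}"
    have Xtm: "Xt \<in> borel_measurable M" using Xt unfolding Xb_def by auto
    show "rho_hat M \<alpha> (Pt \<theta>) X \<le> rho M \<alpha> Xt"
      unfolding rho_hat_def rho_def
    proof (rule SUP_least)
      fix Q assume Q: "Q \<in> {Q \<in> M1 M. absolutely_continuous (Pt \<theta>) Q}"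
      have "(\<integral>\<omega>. - Xt \<omega> \<partial>Q) = (\<integral>\<omega>. - X \<omega> \<partial>Q)"
        using Q Xt unfolding M1_def
        by (intro integral_ac_eq[OF _ sPt[OF th] _ Xm Xtm]) auto
      then show "ereal (\<integral>\<omega>. - X \<omega> \<partial>Q) - \<alpha> Q \<le> (SUP Q \<in> M1 M. ereal (\<integral>\<omega>. - Xt \<omega> \<partial>Q) - \<alpha> Q)"
        using Q by (intro SUP_upper2[of Q]) auto
    qed
  qed
  obtain ts where ts: "ts \<in> space \<nu>" and acts: "absolutely_continuous (Pt ts) Pm"
    using dominating[OF nu Pt_M1 Pt_meas conv Pm_M1 Pm_mix sing] by blast
  have step4: "V \<le> rho_hat M \<alpha> (Pt ts) X"
    unfolding V_def rho_hat_def
  proof (rule SUP_subset_mono)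
    show "{Q \<in> M1 M. absolutely_continuous Pm Q} \<subseteq> {Q \<in> M1 M. absolutely_continuous (Pt ts) Q}"
      using acts unfolding absolutely_continuous_def by auto
  qed simp
  have A: "rho_hatM M \<alpha> ?Ms X \<le> V" unfolding rho_hatM_def
    using step2 step3 by (auto intro!: SUP_least intro: order_trans)
  have B: "rhoM M \<alpha> ?Ms X \<le> V" unfolding rhoM_def
    using step2 by (auto intro!: SUP_least)
  have C: "V \<le> rho_hatM M \<alpha> ?Ms X" unfolding rho_hatM_def
    using step4 ts by (intro SUP_upper2[of "Pt ts"]) auto
  have D: "V \<le> rhoM M \<alpha> ?Ms X" unfolding rhoM_def
    using step4 step3[OF ts] ts by (intro SUP_upper2[of "Pt ts"]) auto
  show ?thesis using A B C D step1 unfolding V_def by auto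
qed

end
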